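(* Let $m<n$ and let $\mathbf{A}\in\mathbb{R}^{m\times n}$ have rank $m$, partitioned as $\mathbf{A} = [\mathbf{X}\,|\,\mathbf{Y}]$ with $\mathbf{X}\in\mathbb{R}^{m\times m}$ invertible (the first $m$ columns form a full-rank square matrix) and $\mathbf{Y}\in\mathbb{R}^{m\times(n-m)}$. Let $\mathbf{A} = \mathbf{Q}\mathbf{R}$ be its QR decomposition with $\mathbf{Q}\in\mathbb{R}^{m\times m}$ orthogonal and $\mathbf{R}\in\mathbb{R}^{m\times n}$ upper triangular, partitioned as $\mathbf{R} = [\mathbf{U}\,|\,\mathbf{V}]$ with $\mathbf{U}\in\mathbb{R}^{m\times m}$ (upper triangular, invertible, $\mathbf{X}=\mathbf{Q}\mathbf{U}$) and $\mathbf{V}\in\mathbb{R}^{m\times(n-m)}$ ($\mathbf{Y}=\mathbf{Q}\mathbf{V}$). Suppose $\mathbf{A}'\mapsto(\mathbf{Q}(\mathbf{A}'),\mathbf{R}(\mathbf{A}'))$ is a differentiable map on a neighborhood of $\mathbf{A}$ giving such a decomposition for each $\mathbf{A}'$ (e.g. normalized so $\mathbf{R}$ has positive diagonal). Let $\bar{\mathbf{Q}}\in\mathbb{R}^{m\times m}$ and $\bar{\mathbf{R}} = [\bar{\mathbf{U}}\,|\,\bar{\mathbf{V}}]\in\mathbb{R}^{m\times n}$ be arbitrary upstream gradients, with $\bar{\mathbf{U}}\in\mathbb{R}^{m\times m}$, $\bar{\mathbf{V}}\in\mathbb{R}^{m\times(n-m)}$. Then the reverse-mode gradient is $\bar{\mathbf{A}}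 = [\bar{\mathbf{X}}\,|\,\bar{\mathbf{Y}}]$ with $$\bar{\mathbf{X}} = \left[\bar{\mathbf{Q}}_{prime} + \mathbf{Q}\,\mathrm{copyltu}(\mathbf{M})\right]\mathbf{U}^{-T},\qquad \bar{\mathbf{Y}} = \mathbf{Q}\bar{\mathbf{V}},$$ where $\bar{\mathbf{Q}}_{prime} = \bar{\mathbf{Q}} + \mathbf{Y}\bar{\mathbf{V}}^T$ and $\mathbf{M} = \mathbf{U}\bar{\mathbf{U}}^T - \bar{\mathbf{Q}}_{prime}^T\mathbf{Q}$.
   Context: Reverse-mode gradient: given a differentiable map $\mathbf{A}\mapsto(\mathbf{Q}(\mathbf{A}),\mathbf{R}(\mathbf{A}))$ and upstream matrices $\bar{\mathbf{Q}},\bar{\mathbf{R}}$ of the same shapes as $\mathbf{Q},\mathbf{R}$, the gradient $\bar{\mathbf{A}}$ is the unique matrix of the shape of $\mathbf{A}$ such that $\mathrm{Tr}(\bar{\mathbf{A}}^T d\mathbf{A}) = \mathrm{Tr}(\bar{\mathbf{Q}}^T d\mathbf{Q}) + \mathrm{Tr}(\bar{\mathbf{R}}^T d\mathbf{R})$ for every direction $d\mathbf{A}$, where $d\mathbf{Q}, d\mathbf{R}$ are the directional derivatives of $\mathbf{Q},\mathbf{R}$ at $\mathbf{A}$ in direction $d\mathbf{A}$. For a square matrix $\mathbf{M}$, $\mathrm{copyltu}(\mathbf{M})$ is the symmetric matrix with entries $\mathrm{copyltu}(\mathbf{M})_{ij} = \mathbf{M}_{\max(i,j),\min(i,j)}$;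 equivalently $\mathrm{copyltu}(\mathbf{M}) = \mathrm{sym}(\mathbf{M}\circ\mathbf{E})$, where $\mathrm{sym}(\mathbf{B}) = (\mathbf{B}+\mathbf{B}^T)/2$, $\circ$ is the Hadamard product and $\mathbf{E}$ has $e_{ij}=0$ if $i<j$, $1$ if $i=j$, $2$ if $i>j$. $\mathbf{U}^{-T} = (\mathbf{U}^{-1})^T$. *)

theory Defs
  imports "HOL-Analysis.Analysis"
begin

text \<open>An m x n matrix with n > m is represented with column index type 'm + 'k:
  the columns Inl j (j :: 'm) are the first m columns (in the order of 'm), the
  columns Inr j (j :: 'k) are the remaining n - m columns. So n - m = CARD('k) \<ge> 1.\<close>

definition left_block :: "('a::zero)^('m::finite + 'k::finite)^('r::finite) \<Rightarrow> 'a^'m^'r" where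
  "left_block A = (\<chi> i j. A $ i $ Inl j)"

definition right_block :: "('a::zero)^('m::finite + 'k::finite)^'r \<Rightarrow> 'a^'k^'r" where
  "right_block A = (\<chi> i j. A $ i $ Inr j)"

definition hcat :: "'a^'m^'r \<Rightarrow> 'a^'k^'r \<Rightarrow> 'a^('m::finite + 'k::finite)^'r" where
  "hcat X Y = (\<chi> i c. case c of Inl j \<Rightarrow> X $ i $ j | Inr j \<Rightarrow> Y $ i $ j)"

text \<open>R (m x n) upper triangular: entries below the diagonal vanish. Since every
  column Inr j has position \<ge> m > row index, only the left block is constrained.\<close>
definition upper_triangular_wide :: "real^('m::{finite,wellorder} + 'k::finite)^('m::{finite,wellorder}) \<Rightarrow> bool" where
  "upper_triangular_wide R \<longleftrightarrow> (\<forall>i j. j < i \<longrightarrow> R $ i $ Inl j = 0)"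

definition copyltu :: "real^('m::{finite,linorder})^('m::{finite,linorder}) \<Rightarrow> real^('m::{finite,linorder})^('m::{finite,linorder})" where
  "copyltu M = (\<chi> i j. M $ (max i j) $ (min i j))"

definition is_reverse_gradient ::
  "(real^'n^'r \<Rightarrow> real^'q^'p) \<Rightarrow> (real^'n^'r \<Rightarrow> real^'s^'t)
   \<Rightarrow> real^'q^'p \<Rightarrow> real^'s^'t \<Rightarrow> real^('n::finite)^('r::finite) \<Rightarrow> bool" where
  "is_reverse_gradient DQ DR Qbar Rbar Abar \<longleftrightarrow>
     (\<forall>dA. trace (transpose Abar ** dA) =
            trace (transpose Qbar ** DQ dA) + trace (transpose Rbar ** DR dA))"

end

theory Submission
  imports Defs
begin

lemma bb_mult: "bounded_bilinear (\<lambda>(X::real^'n::finite^'m::finite) (Y::real^'p::finite^'n). X ** Y)"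
proof -
  have "bilinear (\<lambda>(X::real^'n::finite^'m::finite) (Y::real^'p::finite^'n). X ** Y)"
    unfolding bilinear_def
    by (auto intro!: linearI simp: vec_eq_iff matrix_matrix_mult_def sum_distrib_left
         sum.distrib algebra_simps scaleR_sum_right)
  then show ?thesis by (simp add: bilinear_conv_bounded_bilinear)
qed

lemma bl_transpose: "bounded_linear (transpose :: real^'n::finite^'m::finite \<Rightarrow> real^'m^'n)"
proof -
  have "linear (transpose :: real^'n::finite^'m::finite \<Rightarrow> real^'m^'n)"
    by (auto intro!: linearI simp: vec_eq_iff transpose_def)
  then show ?thesis by (simp add: linear_conv_bounded_linear)
qed

lemma deriv_local_eq:
  assumes "(f has_derivative F) (at a)" "(g has_derivative G) (at a)" "open S" "a \<in> S"
    "\<And>x. x \<in> S \<Longrightarrow> f x = g x"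
  shows "F = G"
proof -
  have "(g has_derivative F) (at a)"
    by (rule has_derivative_transform_within_open[OF assms(1,3,4)]) (use assms(5) in auto)
  then show ?thesis using assms(2) has_derivative_unique by blast
qed

lemma prod_rule:
  assumes "(f has_derivative F) (at a)" "(g has_derivative G) (at a)"
  shows "((\<lambda>x. (f x :: real^'n::finite^'m::finite) ** (g x :: real^'p::finite^'n)) has_derivative
          (\<lambda>h. f a ** G h + F h ** g a)) (at a)"
  using bounded_bilinear.FDERIV[OF bb_mult assms] by simp

lemma trace_frob: "trace (transpose (B::real^'c::finite^'r::finite) ** C) = (\<Sum>i\<in>UNIV. \<Sum>j\<in>UNIV. B$i$j * C$i$j)"
proof -
  have "trace (transpose B ** C) = (\<Sum>j\<in>UNIV. \<Sum>i\<in>UNIV. B$i$j * C$i$j)"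
    by (simp add: trace_def matrix_matrix_mult_def transpose_def)
  also have "\<dots> = (\<Sum>i\<in>UNIV. \<Sum>j\<in>UNIV. B$i$j * C$i$j)" by (rule sum.swap)
  finally show ?thesis .
qed

lemma sum_UNIV_Plus: "(\<Sum>c\<in>(UNIV::('a::finite+'b::finite) set). f c) = (\<Sum>j\<in>UNIV. f (Inl j)) + (\<Sum>j\<in>UNIV. f (Inr j))"
  by (subst UNIV_Plus_UNIV[symmetric], subst sum.Plus) (auto simp: o_def)

lemma trace_blocks:
  fixes B D :: "real^('m::finite+'k::finite)^'r::finite"
  shows "trace (transpose B ** D) = trace (transpose (left_block B) ** left_block D)
          + trace (transpose (right_block B) ** right_block D)"
  unfolding trace_frob left_block_def right_block_def
  by (simp add: sum_UNIV_Plus sum.distrib)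

lemma left_hcat[simp]: "left_block (hcat X Y) = X"
  by (simp add: left_block_def hcat_def vec_eq_iff)
lemma right_hcat[simp]: "right_block (hcat X Y) = Y"
  by (simp add: right_block_def hcat_def vec_eq_iff)

lemma left_mult: "left_block ((B::real^'r::finite^'p::finite) ** C) = B ** left_block (C::real^('m::finite+'k::finite)^'r)"
  by (simp add: left_block_def matrix_matrix_mult_def vec_eq_iff)
lemma right_mult: "right_block ((B::real^'r::finite^'p::finite) ** C) = B ** right_block (C::real^('m::finite+'k::finite)^'r)"
  by (simp add: right_block_def matrix_matrix_mult_def vec_eq_iff)
lemma left_add: "left_block ((B::real^('m::finite+'k::finite)^'r::finite) + C) = left_block B + left_block C"
  by (simp add: left_block_def vec_eq_iff)
lemma right_add: "right_block ((B::real^('m::finite+'k::finite)^'r::finite) + C) = right_block B + right_block C"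
  by (simp add: right_block_def vec_eq_iff)

lemma inv_upper:
  fixes U L :: "real^('n::{finite,wellorder})^('n::{finite,wellorder})"
  assumes up: "\<And>i j. j < i \<Longrightarrow> U$i$j = 0" and inv: "U ** L = mat 1" and d: "det U \<noteq> 0"
  shows "j < i \<Longrightarrow> L$i$j = 0"
proof (rule ccontr)
  assume ji: "j < i" and nz: "L$i$j \<noteq> 0"
  let ?B = "{i. j < i \<and> L$i$j \<noteq> 0}"
  have ne: "?B \<noteq> {}" using ji nz by auto
  define p where "p = Max ?B"
  have pB: "p \<in> ?B" unfolding p_def by (rule Max_in) (use ne in auto)
  have pmax: "\<And>k. k \<in> ?B \<Longrightarrow> k \<le> p" unfolding p_def by (rule Max_ge) auto
  have "(U ** L)$p$j = (\<Sum>k\<in>UNIV. U$p$k * L$k$j)" by (simp add: matrix_matrix_mult_def)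
  also have "\<dots> = (\<Sum>k\<in>UNIV. if k = p then U$p$p * L$p$j else 0)"
  proof (rule sum.cong[OF refl])
    fix k
    show "U$p$k * L$k$j = (if k = p then U$p$p * L$p$j else 0)"
    proof (cases k p rule: linorder_cases)
      case less then show ?thesis using up by simp
    next
      case equal then show ?thesis by simp
    next
      case greater
      then have "k \<notin> ?B" using pmax by (meson not_le)
      moreover have "j < k" using greater pB by auto
      ultimately show ?thesis using greater by auto
    qed
  qed
  also have "\<dots> = U$p$p * L$p$j" by simp
  finally have e: "(U ** L)$p$j = U$p$p * L$p$j" .
  have "(U ** L)$p$j = 0" using inv pB by (auto simp add: mat_def dest: less_imp_neq)
  moreover have "U$p$p \<noteq> 0" using d det_upperdiagonal[of U, OF up] by (metis (mono_tags, lifting) finite prod_zero_iff UNIV_I)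
  ultimately show False using e pB by simp
qed


lemma mm_add_r: "((A::real^'n::finite^'m::finite) + B) ** (C::real^'p::finite^'n) = A ** C + B ** C"
  by (simp add: vec_eq_iff matrix_matrix_mult_def sum.distrib algebra_simps)
lemma mm_diff_l: "(A::real^'n::finite^'m::finite) ** ((B::real^'p::finite^'n) - C) = A ** B - A ** C"
  by (simp add: vec_eq_iff matrix_matrix_mult_def sum_subtractf algebra_simps)
lemma mm_diff_r: "((A::real^'n::finite^'m::finite) - B) ** (C::real^'p::finite^'n) = A ** C - B ** C"
  by (simp add: vec_eq_iff matrix_matrix_mult_def sum_subtractf algebra_simps)
lemma mm_neg_r: "(A::real^'n::finite^'m::finite) ** (- (B::real^'p::finite^'n)) = - (A ** B)"
  by (simp add: vec_eq_iff matrix_matrix_mult_def sum_negf)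
lemma mm_neg_l: "(- (A::real^'n::finite^'m::finite)) ** (B::real^'p::finite^'n) = - (A ** B)"
  by (simp add: vec_eq_iff matrix_matrix_mult_def sum_negf)
lemma tr_add: "transpose ((A::real^'n::finite^'m::finite) + B) = transpose A + transpose B"
  by (simp add: vec_eq_iff transpose_def)
lemma tr_diff: "transpose ((A::real^'n::finite^'m::finite) - B) = transpose A - transpose B"
  by (simp add: vec_eq_iff transpose_def)
lemma trace_neg: "trace (- (A::real^'n::finite^'n)) = - trace A"
  by (simp add: trace_def sum_negf)
lemma trace_transp: "trace (transpose (A::real^'n::finite^'n)) = trace A"
  by (simp add: trace_def transpose_def)

lemma skew_tr:
  fixes N W :: "real^'n::finite^'n"
  assumes "transpose W = - W"
  shows "trace (N ** W) = - trace (transpose N ** W)"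
proof -
  have "trace (N ** W) = trace (transpose (N ** W))" by (simp add: trace_transp)
  also have "\<dots> = trace (transpose W ** transpose N)" by (simp add: matrix_transpose_mul)
  also have "\<dots> = trace (- (W ** transpose N))"
    by (simp add: assms mm_neg_l)
  also have "\<dots> = - trace (transpose N ** W)" by (simp only: trace_neg trace_mul_sym[of W])
  finally show ?thesis .
qed

lemma trace_copyltu:
  fixes M T :: "real^('n::{finite,wellorder})^('n::{finite,wellorder})"
  assumes up: "\<And>i j. j < i \<Longrightarrow> T$i$j = 0"
  shows "trace (copyltu M ** T) = trace (M ** T)"
  unfolding trace_def matrix_matrix_mult_def copyltu_def
proof (simp, intro sum.cong refl)
  fix i k :: 'n
  show "M $ max i k $ min i k * T $ k $ i = M $ i $ k * T $ k $ i"
    by (cases "k \<le> i") (auto simp: max_def min_def up)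
qed

theorem proposition2:
  fixes A :: "real^(('m::{finite,wellorder}) + ('k::finite))^('m::{finite,wellorder})"
    and Qf :: "real^(('m::{finite,wellorder}) + ('k::finite))^('m::{finite,wellorder}) \<Rightarrow> real^('m::{finite,wellorder})^('m::{finite,wellorder})"
    and Rf :: "real^(('m::{finite,wellorder}) + ('k::finite))^('m::{finite,wellorder}) \<Rightarrow> real^(('m::{finite,wellorder}) + ('k::finite))^('m::{finite,wellorder})"
    and DQ :: "real^(('m::{finite,wellorder}) + ('k::finite))^('m::{finite,wellorder}) \<Rightarrow> real^('m::{finite,wellorder})^('m::{finite,wellorder})"
    and DR :: "real^(('m::{finite,wellorder}) + ('k::finite))^('m::{finite,wellorder}) \<Rightarrow> real^(('m::{finite,wellorder}) + ('k::finite))^('m::{finite,wellorder})"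
    and S :: "(real^(('m::{finite,wellorder}) + ('k::finite))^('m::{finite,wellorder})) set"
    and Qbar :: "real^('m::{finite,wellorder})^('m::{finite,wellorder})"
    and Rbar :: "real^(('m::{finite,wellorder}) + ('k::finite))^('m::{finite,wellorder})"
  assumes X_inv: "invertible (left_block A)"
    and S_open: "open S" and A_in_S: "A \<in> S"
    and QR: "\<And>A'. A' \<in> S \<Longrightarrow>
               orthogonal_matrix (Qf A') \<and> upper_triangular_wide (Rf A') \<and> A' = Qf A' ** Rf A'"
    and dQ: "(Qf has_derivative DQ) (at A)"
    and dR: "(Rf has_derivative DR) (at A)"
  shows "let X = left_block A; Y = right_block A; Q = Qf A;
             U = left_block (Rf A);
             Ubar = left_block Rbar; Vbar = right_block Rbar;
             Qbar_prime = Qbar + Y ** transpose Vbar;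
             M = U ** transpose Ubar - transpose Qbar_prime ** Q;
             Xbar = (Qbar_prime + Q ** copyltu M) ** transpose (matrix_inv U);
             Ybar = Q ** Vbar
         in is_reverse_gradient DQ DR Qbar Rbar (hcat Xbar Ybar)"
  proof -
  define Q where "Q = Qf A"
  define R where "R = Rf A"
  define U where "U = left_block R"
  define V where "V = right_block R"
  define Ubar where "Ubar = left_block Rbar"
  define Vbar where "Vbar = right_block Rbar"
  define Y where "Y = right_block A"
  define P where "P = Qbar + Y ** transpose Vbar"
  define M where "M = U ** transpose Ubar - transpose P ** Q"
  define C where "C = copyltu M"
  define L where "L = matrix_inv U"
  define Xbar where "Xbar = (P + Q ** C) ** transpose L"
  define Ybar where "Ybar = Q ** Vbar"
  have QRA: "orthogonal_matrix Q" "upper_triangular_wide R" "A = Q ** R"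
    using QR[OF A_in_S] unfolding Q_def R_def by auto
  have QtQ: "transpose Q ** Q = mat 1" using QRA(1) by (simp add: orthogonal_matrix_def)
  have Uup: "\<And>i j. j < i \<Longrightarrow> U$i$j = 0"
    using QRA(2) by (simp add: U_def left_block_def upper_triangular_wide_def)
  have XQU: "left_block A = Q ** U" using QRA(3) by (simp add: U_def left_mult)
  have YQV: "Y = Q ** V" using QRA(3) by (simp add: V_def Y_def right_mult)
  have "det (left_block A) \<noteq> 0" using X_inv invertible_det_nz by blast
  then have detU: "det U \<noteq> 0" using XQU det_mul by (metis mult_zero_right)
  then have "invertible U" using invertible_det_nz by blast
  then have UL: "U ** L = mat 1 \<and> L ** U = mat 1"
    unfolding L_def matrix_inv_def invertible_def by (rule someI_ex)
  have Lup: "\<And>i j. j < i \<Longrightarrow> L$i$j = 0"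
    using inv_upper[OF Uup _ detU] UL by blast
  have Csym: "transpose C = C"
    by (simp add: C_def copyltu_def transpose_def vec_eq_iff max.commute min.commute)
  have F1: "DQ h ** R + Q ** DR h = h" for h
  proof -
    have "(\<lambda>h. Qf A ** DR h + DQ h ** Rf A) = (\<lambda>h. h)"
      by (rule deriv_local_eq[OF prod_rule[OF dQ dR] has_derivative_ident S_open A_in_S])
         (use QR in \<open>auto simp: Q_def R_def\<close>)
    then show ?thesis unfolding Q_def R_def by (metis add.commute)
  qed
  have F2: "transpose Q ** DQ h + transpose (DQ h) ** Q = 0" for h
  proof -
    have "(\<lambda>h. transpose (Qf A) ** DQ h + transpose (DQ h) ** Qf A) = (\<lambda>h. 0)"
      by (rule deriv_local_eq[OF prod_rule[OF bounded_linear.has_derivative[OF bl_transpose dQ] dQ]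
           has_derivative_const[of "mat 1"] S_open A_in_S])
         (use QR in \<open>auto simp: Q_def orthogonal_matrix_def\<close>)
    then show ?thesis unfolding Q_def by metis
  qed
  have F3: "DR h $ i $ Inl j = 0" if "j < i" for h i j
  proof -
    have d: "((\<lambda>x. Rf x $ i $ Inl j) has_derivative (\<lambda>h. DR h $ i $ Inl j)) (at A)"
      using bounded_linear.has_derivative[OF bounded_linear_vec_nth
             bounded_linear.has_derivative[OF bounded_linear_vec_nth dR]] .
    have "(\<lambda>h. DR h $ i $ Inl j) = (\<lambda>h. 0)"
      by (rule deriv_local_eq[OF d has_derivative_const[of 0] S_open A_in_S])
         (use QR that in \<open>auto simp: upper_triangular_wide_def\<close>)
    then show ?thesis by metis
  qed
  have key: "trace (transpose (hcat Xbar Ybar) ** dA) =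
             trace (transpose Qbar ** DQ dA) + trace (transpose Rbar ** DR dA)" for dA
  proof -
    define dQ' where "dQ' = DQ dA"
    define dU where "dU = left_block (DR dA)"
    define dV where "dV = right_block (DR dA)"
    define W where "W = transpose Q ** dQ'"
    define T where "T = dU ** L"
    have dX: "left_block dA = dQ' ** U + Q ** dU"
      using F1[of dA] by (metis dQ'_def dU_def U_def left_add left_mult)
    have dY: "right_block dA = dQ' ** V + Q ** dV"
      using F1[of dA] by (metis dQ'_def dV_def V_def right_add right_mult right_block_def)
    have Wskew: "transpose W = - W"
    proof -
      have "transpose W = transpose dQ' ** Q" by (simp add: W_def matrix_transpose_mul)
      also have "\<dots> = - W" using F2[of dA] by (simp add: W_def dQ'_def eq_neg_iff_add_eq_0 add.commute)
      finally show ?thesis .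
    qed
    have dUup: "\<And>i j. j < i \<Longrightarrow> dU$i$j = 0" using F3 by (simp add: dU_def left_block_def)
    have Tup: "\<And>i j. j < i \<Longrightarrow> T$i$j = 0"
    proof -
      fix i j :: 'm assume ji: "j < i"
      have "T$i$j = (\<Sum>k\<in>UNIV. dU$i$k * L$k$j)" by (simp add: T_def matrix_matrix_mult_def)
      also have "\<dots> = 0"
      proof (rule sum.neutral, rule ballI)
        fix k show "dU$i$k * L$k$j = 0"
          by (cases "k < i") (use dUup Lup ji in \<open>auto simp: not_less\<close>)
      qed
      finally show "T$i$j = 0" .
    qed
    have Ypart: "trace (transpose Ybar ** right_block dA)
        = trace (transpose Vbar ** W ** V) + trace (transpose Vbar ** dV)"
    proof -
      have "trace (transpose Ybar ** right_block dA)
          = trace (transpose Vbar ** transpose Q ** (dQ' ** V))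
            + trace (transpose Vbar ** transpose Q ** (Q ** dV))"
        by (simp only: dY Ybar_def matrix_add_ldistrib trace_add matrix_transpose_mul)
      moreover have "transpose Vbar ** transpose Q ** (dQ' ** V) = transpose Vbar ** W ** V"
        by (simp only: W_def matrix_mul_assoc)
      moreover have "transpose Vbar ** transpose Q ** (Q ** dV) = transpose Vbar ** (transpose Q ** Q) ** dV"
        by (simp only: matrix_mul_assoc)
      ultimately show ?thesis by (simp add: QtQ)
    qed
    have CW: "trace (C ** W) = 0"
      using skew_tr[OF Wskew, of C] Csym by simp
    have S2a: "trace (transpose Vbar ** W ** V) = - trace ((Vbar ** transpose V) ** W)"
    proof -
      have "trace (transpose Vbar ** W ** V) = trace (V ** (transpose Vbar ** W))"
        by (rule trace_mul_sym)
      also have "\<dots> = trace ((V ** transpose Vbar) ** W)" by (simp add: matrix_mul_assoc)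
      also have "\<dots> = - trace (transpose (V ** transpose Vbar) ** W)" by (rule skew_tr[OF Wskew])
      also have "\<dots> = - trace ((Vbar ** transpose V) ** W)" by (simp add: matrix_transpose_mul)
      finally show ?thesis .
    qed
    have S2b: "trace (transpose (Y ** transpose Vbar) ** dQ') = trace ((Vbar ** transpose V) ** W)"
      by (simp add: YQV W_def matrix_transpose_mul matrix_mul_assoc)
    have S5: "trace (transpose P ** dQ') = trace (transpose Qbar ** dQ') + trace ((Vbar ** transpose V) ** W)"
      using S2b by (simp add: P_def tr_add mm_add_r trace_add)
    have GT: "transpose (P + Q ** C) = transpose P + C ** transpose Q"
      by (simp add: tr_add matrix_transpose_mul Csym)
    define G where "G = transpose P + C ** transpose Q"
    have X1: "trace (transpose Xbar ** left_block dA) = trace (G ** dQ') + trace (G ** Q ** T)"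
    proof -
      have "transpose Xbar = L ** G" by (simp add: Xbar_def matrix_transpose_mul GT G_def)
      then have "trace (transpose Xbar ** left_block dA)
           = trace (L ** (G ** dQ' ** U)) + trace (L ** (G ** Q ** dU))"
        by (simp add: dX matrix_add_ldistrib trace_add matrix_mul_assoc)
      also have "\<dots> = trace (G ** dQ' ** U ** L) + trace (G ** Q ** dU ** L)"
        by (simp add: trace_mul_sym[of L])
      also have "\<dots> = trace (G ** dQ') + trace (G ** Q ** T)"
        using UL by (simp add: T_def flip: matrix_mul_assoc)
      finally show ?thesis .
    qed
    have X2: "trace (G ** dQ') = trace (transpose P ** dQ')"
      using CW by (simp add: G_def mm_add_r trace_add W_def matrix_mul_assoc)
    have X3: "trace (G ** Q ** T) = trace (transpose P ** Q ** T) + trace (C ** T)"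
    proof -
      have "G ** Q = transpose P ** Q + C"
        by (simp add: G_def mm_add_r QtQ flip: matrix_mul_assoc)
      then show ?thesis by (simp add: mm_add_r trace_add)
    qed
    have X4: "trace (C ** T) = trace (U ** transpose Ubar ** T) - trace (transpose P ** Q ** T)"
    proof -
      have "trace (C ** T) = trace (M ** T)" unfolding C_def by (rule trace_copyltu[OF Tup])
      then show ?thesis by (simp add: M_def mm_diff_r trace_sub)
    qed
    have X5: "trace (U ** transpose Ubar ** T) = trace (transpose Ubar ** dU)"
    proof -
      have "trace (U ** transpose Ubar ** T) = trace (U ** (transpose Ubar ** dU ** L))"
        by (simp add: T_def matrix_mul_assoc)
      also have "\<dots> = trace (transpose Ubar ** dU ** L ** U)" by (rule trace_mul_sym)
      also have "\<dots> = trace (transpose Ubar ** dU)" using UL by (simp flip: matrix_mul_assoc)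
      finally show ?thesis .
    qed
    have B1: "trace (transpose (hcat Xbar Ybar) ** dA) = trace (transpose Xbar ** left_block dA)
         + trace (transpose Ybar ** right_block dA)"
      using trace_blocks[of "hcat Xbar Ybar" dA] by simp
    have B2: "trace (transpose Rbar ** DR dA) = trace (transpose Ubar ** dU) + trace (transpose Vbar ** dV)"
      using trace_blocks[of Rbar "DR dA"] by (simp add: Ubar_def Vbar_def dU_def dV_def)
    show ?thesis
      using B1 B2 X1 X2 X3 X4 X5 S5 S2a Ypart unfolding dQ'_def[symmetric] by linarith
  qed
  show ?thesis
    unfolding Let_def is_reverse_gradient_def
    using key unfolding Xbar_def Ybar_def P_def M_def C_def L_def U_def Q_def R_def Y_def Ubar_def Vbar_def
    by blast
qed

end
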